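(* Let $A$ be an algebra of Engel type and let $I$ be a sandwich ideal of $A$. If $A/I$ is a Yagzhev algebra, then $A$ is a Yagzhev algebra.
   Context: An algebra here is a vector space $A$ over a field $\Bbbk$ of characteristic zero equipped with finitely many symmetric multilinear operations $\Psi_\ell:A^\ell\to A$, $2\le\ell\le m$. An ideal is a subspace $I$ such that $\Psi_\ell(a_1,\dots,a_\ell)\in I$ whenever some $a_i\in I$. A monomial is a formal expression built from variables by applying the operations $\Psi_\ell$; its degree is the number of occurrences of variables. $I$ is a sandwich ideal if for every $k\ge0$, every multilinear monomial $M(z_1,z_2,x_1,\dots,x_k)$ of degree $k+2$, every $z_1,z_2\in I$ and every $x_1,\dots,x_k\in A$, one has $M(z_1,z_2,x_1,\dots,x_k)=0$. Terms: $x$ is a term with $|x|=1$; if $t_1,\dots,t_\ell$ are terms then $\Psi_\ell(t_1,\dots,t_\ell)$ is a term with $|\cdot|=\sum|t_i|$ (distinct formal expressions are distinct terms). $A$ is a Yagzhev algebra if there is $q_0$ with $\sum_{|t|=q}t(a)=0$ for all $a\in A$ and all $q\ge q_0$. For $x\in A$ let $\mathrm{Ad}_{\ell-1}(x)$ be the linear map $y\mapsto\Psi_\ell(y,x,\dots,x)$, and let $E_s(x)=\sum \ell_1\cdots\ell_q\,\mathrm{Ad}_{\ell_1-1}(x)\circ\cdots\circ\mathrm{Ad}_{\ell_q-1}(x)$, summed over all $q\ge1$ and sequences with $2\le\ell_i\le m$ and $\sum(\ell_i-1)=s$ (the degree-$s$ component of $\sum_{k\ge0}(\sum_\ell\ell\,\mathrm{Ad}_{\ell-1}(x))^k$).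 $A$ is of Engel type if there is $s_0$ with $E_s(x)=0$ for all $x\in A$ and all $s\ge s_0$. *)

theory Defs
  imports Complex_Main "HOL-Library.Multiset"
begin

text \<open>Formal expressions built from variables (indexed by naturals) by applying
  the operations; an application node with list of children ts stands for the
  operation of arity length ts.\<close>
datatype tm = V nat | Op "tm list"

fun wf_tm :: "nat \<Rightarrow> tm \<Rightarrow> bool" where
  "wf_tm m (V i) = True"
| "wf_tm m (Op ts) = (2 \<le> length ts \<and> length ts \<le> m \<and> (\<forall>t\<in>set ts. wf_tm m t))"

fun leaves :: "tm \<Rightarrow> nat list" where
  "leaves (V i) = [i]"
| "leaves (Op ts) = concat (map leaves ts)"

definition deg :: "tm \<Rightarrow> nat" where
  "deg t = length (leaves t)"

fun eval_tm :: "(nat \<Rightarrow> 'a list \<Rightarrow> 'a) \<Rightarrow> (nat \<Rightarrow> 'a) \<Rightarrow> tm \<Rightarrow> 'a" where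
  "eval_tm Psi \<rho> (V i) = \<rho> i"
| "eval_tm Psi \<rho> (Op ts) = Psi (length ts) (map (eval_tm Psi \<rho>) ts)"

definition multilinear_op :: "('k::field_char_0 \<Rightarrow> 'a \<Rightarrow> 'a) \<Rightarrow> nat \<Rightarrow> ('a::ab_group_add list \<Rightarrow> 'a) \<Rightarrow> bool" where
  "multilinear_op scale l f \<longleftrightarrow>
     (\<forall>xs i u v c. length xs = l \<and> i < l \<longrightarrow>
        f (xs[i := scale c u + v]) = scale c (f (xs[i := u])) + f (xs[i := v]))"

definition symmetric_op :: "nat \<Rightarrow> ('a list \<Rightarrow> 'a) \<Rightarrow> bool" where
  "symmetric_op l f \<longleftrightarrow> (\<forall>xs ys. length xs = l \<and> mset xs = mset ys \<longrightarrow> f xs = f ys)"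

definition algebra_ops :: "('k::field_char_0 \<Rightarrow> 'a::ab_group_add \<Rightarrow> 'a) \<Rightarrow> nat \<Rightarrow> (nat \<Rightarrow> 'a list \<Rightarrow> 'a) \<Rightarrow> bool" where
  "algebra_ops scale m Psi \<longleftrightarrow> vector_space scale \<and>
     (\<forall>l. 2 \<le> l \<and> l \<le> m \<longrightarrow> multilinear_op scale l (Psi l) \<and> symmetric_op l (Psi l))"

definition is_ideal :: "('k::field_char_0 \<Rightarrow> 'a::ab_group_add \<Rightarrow> 'a) \<Rightarrow> nat \<Rightarrow> (nat \<Rightarrow> 'a list \<Rightarrow> 'a) \<Rightarrow> 'a set \<Rightarrow> bool" where
  "is_ideal scale m Psi I \<longleftrightarrow> module.subspace scale I \<and>
     (\<forall>l xs. 2 \<le> l \<and> l \<le> m \<and> length xs = l \<and> (\<exists>x\<in>set xs. x \<in> I) \<longrightarrow> Psi l xs \<in> I)"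

text \<open>Sandwich ideal: every multilinear monomial M(z1,z2,x1,...,xk) (variables
  0,1 are z1,z2; variable i+2 is x_(i+1)) vanishes when z1, z2 are in I.\<close>
definition sandwich_ideal :: "('k::field_char_0 \<Rightarrow> 'a::ab_group_add \<Rightarrow> 'a) \<Rightarrow> nat \<Rightarrow> (nat \<Rightarrow> 'a list \<Rightarrow> 'a) \<Rightarrow> 'a set \<Rightarrow> bool" where
  "sandwich_ideal scale m Psi I \<longleftrightarrow> is_ideal scale m Psi I \<and>
     (\<forall>k M z1 z2 xs. wf_tm m M \<and> mset (leaves M) = mset [0..<k+2] \<and>
        z1 \<in> I \<and> z2 \<in> I \<and> length xs = k \<longrightarrow>
        eval_tm Psi (\<lambda>i. if i = 0 then z1 else if i = 1 then z2 else xs ! (i - 2)) M = 0)"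

text \<open>Terms in the single variable x (represented by V 0) of degree q.\<close>
definition terms_deg :: "nat \<Rightarrow> nat \<Rightarrow> tm set" where
  "terms_deg m q = {t. wf_tm m t \<and> set (leaves t) \<subseteq> {0} \<and> deg t = q}"

text \<open>The quotient algebra A/I is Yagzhev: the Yagzhev sums lie in I
  (i.e. vanish modulo I).  Yagzhev for A itself is the case I = {0}.\<close>
definition yagzhev_mod :: "nat \<Rightarrow> (nat \<Rightarrow> 'a::ab_group_add list \<Rightarrow> 'a) \<Rightarrow> 'a set \<Rightarrow> bool" where
  "yagzhev_mod m Psi I \<longleftrightarrow> (\<exists>q0. \<forall>a q. q0 \<le> q \<longrightarrow>
      (\<Sum>t\<in>terms_deg m q. eval_tm Psi (\<lambda>_. a) t) \<in> I)"

definition yagzhev :: "nat \<Rightarrow> (nat \<Rightarrow> 'a::ab_group_add list \<Rightarrow> 'a) \<Rightarrow> bool" where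
  "yagzhev m Psi \<longleftrightarrow> (\<exists>q0. \<forall>a q. q0 \<le> q \<longrightarrow>
      (\<Sum>t\<in>terms_deg m q. eval_tm Psi (\<lambda>_. a) t) = 0)"

text \<open>Ad_(l-1)(x) y = Psi_l(y,x,...,x).\<close>
definition Ad :: "(nat \<Rightarrow> 'a list \<Rightarrow> 'a) \<Rightarrow> nat \<Rightarrow> 'a \<Rightarrow> 'a \<Rightarrow> 'a" where
  "Ad Psi l x y = Psi l (y # replicate (l - 1) x)"

definition engel_seqs :: "nat \<Rightarrow> nat \<Rightarrow> nat list set" where
  "engel_seqs m s = {ls. ls \<noteq> [] \<and> (\<forall>l\<in>set ls. 2 \<le> l \<and> l \<le> m) \<and>
                         sum_list (map (\<lambda>l. l - 1) ls) = s}"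

definition E_op :: "('k::field_char_0 \<Rightarrow> 'a::ab_group_add \<Rightarrow> 'a) \<Rightarrow> nat \<Rightarrow> (nat \<Rightarrow> 'a list \<Rightarrow> 'a)
                     \<Rightarrow> nat \<Rightarrow> 'a \<Rightarrow> 'a \<Rightarrow> 'a" where
  "E_op scale m Psi s x y =
     (\<Sum>ls\<in>engel_seqs m s. scale (of_nat (prod_list ls))
         (foldr (\<lambda>l f. Ad Psi l x \<circ> f) ls id y))"

definition engel_type :: "('k::field_char_0 \<Rightarrow> 'a::ab_group_add \<Rightarrow> 'a) \<Rightarrow> nat \<Rightarrow> (nat \<Rightarrow> 'a list \<Rightarrow> 'a) \<Rightarrow> bool" where
  "engel_type scale m Psi \<longleftrightarrow> (\<exists>s0. \<forall>s x y. s0 \<le> s \<longrightarrow> E_op scale m Psi s x y = 0)"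

end

theory Submission
  imports Defs
begin

definition lprod :: "'b set list \<Rightarrow> 'b list set" where
  "lprod Ss = {is. list_all2 (\<in>) is Ss}"

lemma lprod_Nil[simp]: "lprod [] = {[]}"
  by (auto simp: lprod_def)

lemma lprod_Cons: "lprod (S # Ss) = (\<lambda>(i,is). i # is) ` (S \<times> lprod Ss)"
  by (auto simp: lprod_def list_all2_Cons2 image_iff)

lemma finite_lprod: "\<forall>S\<in>set Ss. finite S \<Longrightarrow> finite (lprod Ss)"
  by (induction Ss) (auto simp: lprod_Cons)

lemma lprod_replicate: "lprod (replicate k A) = {xs. length xs = k \<and> set xs \<subseteq> A}"
  apply (auto simp: lprod_def list_all2_conv_all_nth in_set_conv_nth)
  using nth_mem by blast

lemma sum_lprod_Cons:
  assumes "finite S" "\<forall>S\<in>set Ss. finite S"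
  shows "(\<Sum>is\<in>lprod (S # Ss). g is) = (\<Sum>i\<in>S. \<Sum>is\<in>lprod Ss. g (i # is))"
proof -
  have "(\<Sum>is\<in>lprod (S # Ss). g is) = (\<Sum>p\<in>S \<times> lprod Ss. case p of (i,is) \<Rightarrow> g (i # is))"
    unfolding lprod_Cons
    by (subst sum.reindex) (auto simp: inj_on_def intro!: sum.cong split: prod.splits)
  also have "\<dots> = (\<Sum>i\<in>S. \<Sum>is\<in>lprod Ss. g (i # is))"
    using assms by (simp add: sum.cartesian_product finite_lprod)
  finally show ?thesis .
qed

locale yalg = vector_space scale
  for scale :: "'k::field_char_0 \<Rightarrow> 'a::ab_group_add \<Rightarrow> 'a" (infixr "*s" 75) +
  fixes m :: nat and Psi :: "nat \<Rightarrow> 'a list \<Rightarrow> 'a"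
  assumes ml: "\<lbrakk>2 \<le> l; l \<le> m\<rbrakk> \<Longrightarrow> multilinear_op scale l (Psi l)"
    and sy: "\<lbrakk>2 \<le> l; l \<le> m\<rbrakk> \<Longrightarrow> symmetric_op l (Psi l)"
begin

definition okl :: "nat \<Rightarrow> bool" where "okl l \<longleftrightarrow> 2 \<le> l \<and> l \<le> m"

lemma slot_lin:
  assumes "okl l" "length ps + Suc (length r) = l"
  shows "Psi l (ps @ (c *s u + v) # r) = c *s Psi l (ps @ u # r) + Psi l (ps @ v # r)"
proof -
  have "multilinear_op scale l (Psi l)" using assms ml okl_def by auto
  then have H: "\<forall>xs i u v c. length xs = l \<and> i < l \<longrightarrow>
        Psi l (xs[i := c *s u + v]) = c *s Psi l (xs[i := u]) + Psi l (xs[i := v])"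
    unfolding multilinear_op_def by blast
  have "Psi l ((ps @ u # r)[length ps := c *s u + v]) =
     c *s Psi l ((ps @ u # r)[length ps := u]) + Psi l ((ps @ u # r)[length ps := v])"
    using assms(2) by (intro H[rule_format]) auto
  then show ?thesis by (simp add: list_update_append)
qed

lemma slot_zero:
  assumes "okl l" "length ps + Suc (length r) = l"
  shows "Psi l (ps @ 0 # r) = 0"
  using slot_lin[OF assms, of 1 0 0] by simp

lemma slot_add:
  assumes "okl l" "length ps + Suc (length r) = l"
  shows "Psi l (ps @ (u + v) # r) = Psi l (ps @ u # r) + Psi l (ps @ v # r)"
  using slot_lin[OF assms, of 1 u v] by simp

lemma slot_scale:
  assumes "okl l" "length ps + Suc (length r) = l"
  shows "Psi l (ps @ (c *s u) # r) = c *s Psi l (ps @ u # r)"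
  using slot_lin[OF assms, of c u 0] slot_zero[OF assms] by simp

lemma slot_sum:
  assumes "okl l" "length ps + Suc (length r) = l"
  shows "Psi l (ps @ (\<Sum>i\<in>S. g i) # r) = (\<Sum>i\<in>S. Psi l (ps @ g i # r))"
proof (induction S rule: infinite_finite_induct)
  case (infinite A) then show ?case using slot_zero[OF assms] by simp
next
  case empty then show ?case using slot_zero[OF assms] by simp
next
  case (insert x F) then show ?case using slot_add[OF assms] by simp
qed

lemma expand:
  assumes "okl l" "length ps + length SFs = l" "\<forall>p\<in>set SFs. finite (fst p)"
  shows "Psi l (ps @ map (\<lambda>p. sum (snd p) (fst p)) SFs) =
     (\<Sum>is\<in>lprod (map fst SFs). Psi l (ps @ map (\<lambda>(p,i). snd p i) (zip SFs is)))"
  using assms(2,3)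
proof (induction SFs arbitrary: ps)
  case Nil then show ?case by simp
next
  case (Cons p SFs)
  have "Psi l (ps @ map (\<lambda>p. sum (snd p) (fst p)) (p # SFs)) =
        Psi l (ps @ sum (snd p) (fst p) # map (\<lambda>p. sum (snd p) (fst p)) SFs)" by simp
  also have "\<dots> = (\<Sum>i\<in>fst p. Psi l (ps @ snd p i # map (\<lambda>p. sum (snd p) (fst p)) SFs))"
    using slot_sum[OF assms(1), of ps "map (\<lambda>p. sum (snd p) (fst p)) SFs" "snd p" "fst p"] Cons.prems by simp
  also have "\<dots> = (\<Sum>i\<in>fst p. Psi l ((ps @ [snd p i]) @ map (\<lambda>p. sum (snd p) (fst p)) SFs))"
    by simp
  also have "\<dots> = (\<Sum>i\<in>fst p. \<Sum>is\<in>lprod (map fst SFs).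
        Psi l ((ps @ [snd p i]) @ map (\<lambda>(p,i). snd p i) (zip SFs is)))"
    using Cons by (intro sum.cong refl Cons.IH) auto
  also have "\<dots> = (\<Sum>is\<in>lprod (map fst (p # SFs)). Psi l (ps @ map (\<lambda>(p,i). snd p i) (zip (p # SFs) is)))"
    using Cons.prems by (simp add: sum_lprod_Cons)
  finally show ?case .
qed

lemma homog:
  assumes "okl l" "length ps + length cxs = l"
  shows "Psi l (ps @ map (\<lambda>(c,x). c *s x) cxs) = prod_list (map fst cxs) *s Psi l (ps @ map snd cxs)"
  using assms(2)
proof (induction cxs arbitrary: ps)
  case Nil then show ?case by simp
next
  case (Cons p cxs)
  obtain c x where p: "p = (c,x)" by force
  have "Psi l (ps @ map (\<lambda>(c,x). c *s x) (p # cxs)) = Psi l ((ps @ [c *s x]) @ map (\<lambda>(c,x). c *s x) cxs)"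
    by (simp add: p)
  also have "\<dots> = prod_list (map fst cxs) *s Psi l ((ps @ [c *s x]) @ map snd cxs)"
    using Cons by (intro Cons.IH) auto
  also have "\<dots> = prod_list (map fst cxs) *s (c *s Psi l (ps @ x # map snd cxs))"
    using slot_scale[OF assms(1), of ps "map snd cxs" c x] Cons.prems by simp
  also have "\<dots> = prod_list (map fst (p # cxs)) *s Psi l (ps @ map snd (p # cxs))"
    by (simp add: p mult.commute)
  finally show ?case .
qed


end

context yalg begin
lemma scale_eq_0_cancel: "c \<noteq> 0 \<Longrightarrow> c *s x = 0 \<Longrightarrow> x = 0"
proof -
  assume c: "c \<noteq> 0" and h: "c *s x = 0"
  have "x = (inverse c * c) *s x" using c by simp
  also have "\<dots> = inverse c *s (c *s x)" by simp
  finally show "x = 0" using h by simp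
qed

lemma poly_ident:
  fixes C :: "nat \<Rightarrow> 'a"
  shows "(\<Sum>q<Suc n. c^q *s C q) = (\<Sum>q<Suc n. c0^q *s C q) +
     (c - c0) *s (\<Sum>k<n. c^k *s (\<Sum>j\<in>{Suc k..n}. (c0^(j - Suc k)) *s C j))"
proof -
  have "(\<Sum>q<Suc n. c^q *s C q) - (\<Sum>q<Suc n. c0^q *s C q) = (\<Sum>q\<le>n. (c^q - c0^q) *s C q)"
    by (simp add: sum_subtractf[symmetric] scale_left_diff_distrib lessThan_Suc_atMost)
  also have "\<dots> = (\<Sum>q\<le>n. ((c - c0) * (\<Sum>i<q. c0^(q - Suc i) * c^i)) *s C q)"
    by (simp add: power_diff_sumr2)
  also have "\<dots> = (c - c0) *s (\<Sum>q\<le>n. \<Sum>i<q. (c^i * c0^(q - Suc i)) *s C q)"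
    unfolding scale_sum_right
    by (intro sum.cong refl) (simp add: scale_sum_left sum_distrib_left scale_sum_right mult_ac)
  also have "(\<Sum>q\<le>n. \<Sum>i<q. (c^i * c0^(q - Suc i)) *s C q) =
      (\<Sum>i<n. \<Sum>q\<in>{Suc i..n}. (c^i * c0^(q - Suc i)) *s C q)"
    by (rule sum.nested_swap')
  also have "\<dots> = (\<Sum>k<n. c^k *s (\<Sum>j\<in>{Suc k..n}. (c0^(j - Suc k)) *s C j))"
    by (simp add: scale_sum_right)
  finally show ?thesis by (simp add: algebra_simps)
qed

lemma poly_zero_aux:
  fixes C :: "nat \<Rightarrow> 'a"
  shows "finite F \<Longrightarrow> (\<forall>c. c \<notin> F \<longrightarrow> (\<Sum>q<n. c^q *s C q) = 0) \<Longrightarrow> \<forall>q<n. C q = 0"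
proof (induction n arbitrary: C F)
  case 0 then show ?case by simp
next
  case (Suc n)
  obtain c0 :: 'k where c0: "c0 \<notin> F"
    using ex_new_if_finite[OF infinite_UNIV_char_0 Suc.prems(1)] by blast
  define Q where "Q k = (\<Sum>j\<in>{Suc k..n}. (c0^(j - Suc k)) *s C j)" for k
  have p0: "(\<Sum>q<Suc n. c0^q *s C q) = 0" by (rule Suc.prems(2)[rule_format, OF c0])
  have "\<forall>c. c \<notin> F \<union> {c0} \<longrightarrow> (\<Sum>k<n. c^k *s Q k) = 0"
  proof (intro allI impI)
    fix c assume c: "c \<notin> F \<union> {c0}"
    have hc: "(\<Sum>q<Suc n. c^q *s C q) = 0" using c by (intro Suc.prems(2)[rule_format]) simp
    have e: "(\<Sum>q<Suc n. c^q *s C q) = (\<Sum>q<Suc n. c0^q *s C q) + (c - c0) *s (\<Sum>k<n. c^k *s Q k)"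
      unfolding Q_def by (rule poly_ident)
    have z: "(c - c0) *s (\<Sum>k<n. c^k *s Q k) = 0"
      using e hc p0 by (metis add_0_left)
    have "c - c0 \<noteq> 0" using c by auto
    then show "(\<Sum>k<n. c^k *s Q k) = 0" using z by (rule scale_eq_0_cancel)
  qed
  then have Q0: "\<forall>k<n. Q k = 0" using Suc.IH[of "F \<union> {c0}" Q] Suc.prems(1) by blast
  have Cn: "C n = 0"
  proof (cases n)
    case 0 then show ?thesis using p0 by simp
  next
    case (Suc n')
    then have "Q n' = C n" by (simp add: Q_def)
    then show ?thesis using Q0 Suc by simp
  qed
  have "\<forall>c. c \<notin> F \<longrightarrow> (\<Sum>q<n. c^q *s C q) = 0" using Suc.prems(2) Cn by simp
  then have "\<forall>q<n. C q = 0" using Suc.IH Suc.prems(1) by blast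
  then show ?case using Cn less_Suc_eq by auto
qed

lemma poly_zero:
  fixes C :: "nat \<Rightarrow> 'a"
  assumes "\<And>c. (\<Sum>q<n. c^q *s C q) = 0" "q < n"
  shows "C q = 0"
  using poly_zero_aux[where F="{}" and n=n and C=C] assms by auto

end

lemma shift_sum:
  fixes g :: "nat \<Rightarrow> 'b::comm_monoid_add" and s B B2 :: nat
  assumes "s + B \<le> B2" "\<forall>i\<ge>B. g i = 0"
  shows "(\<Sum>q<B2. if s \<le> q then g (q - s) else 0) = (\<Sum>i<B. g i)"
proof -
  have "(\<Sum>q<B2. if s \<le> q then g (q - s) else 0) = (\<Sum>q\<in>{s..<B2}. g (q - s))"
    by (rule sum.mono_neutral_cong_right) auto
  also have "\<dots> = (\<Sum>q\<in>{0 + s..<(B2 - s) + s}. g (q - s))" using assms by simp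
  also have "\<dots> = (\<Sum>i\<in>{0..<B2 - s}. g i)" by (subst sum.shift_bounds_nat_ivl) simp
  also have "\<dots> = (\<Sum>i<B. g i)"
    using assms by (intro sum.mono_neutral_cong_right) auto
  finally show ?thesis .
qed

lemma sum_list_le_len: "set xs \<subseteq> {..<q0} \<Longrightarrow> sum_list xs \<le> length xs * q0"
  by (induction xs) auto

lemma len_le_sum_list: "set xs \<subseteq> {1..} \<Longrightarrow> length xs \<le> sum_list xs"
  by (induction xs) auto

lemma prod_list_pow: "prod_list (map (\<lambda>j. c ^ j) xs) = (c::'b::comm_monoid_mult) ^ sum_list xs"
  by (induction xs) (auto simp: power_add)

lemma sum_list_engel: "\<forall>l::nat\<in>set ls. 2 \<le> l \<Longrightarrow> sum_list ls \<le> 2 * sum_list (map (\<lambda>l. l - 1) ls)"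
  by (induction ls) auto

lemma len_engel: "\<forall>l::nat\<in>set ls. 2 \<le> l \<Longrightarrow> length ls \<le> sum_list (map (\<lambda>l. l - 1) ls)"
  by (induction ls) auto

context yalg begin

definition SM :: "nat \<Rightarrow> nat \<Rightarrow> nat list set" where
  "SM q0 k = {\<sigma>. length \<sigma> = k \<and> set \<sigma> \<subseteq> {1..<q0}}"

lemma SM_lprod: "SM q0 k = lprod (replicate k {1..<q0})"
  by (simp add: SM_def lprod_replicate)

lemma finite_SM: "finite (SM q0 k)"
  unfolding SM_lprod by (rule finite_lprod) auto

lemma SM_sum_le: "\<sigma> \<in> SM q0 k \<Longrightarrow> sum_list \<sigma> \<le> k * q0"
proof -
  assume "\<sigma> \<in> SM q0 k"
  then have "set \<sigma> \<subseteq> {..<q0}" "length \<sigma> = k" by (auto simp: SM_def)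
  then show ?thesis using sum_list_le_len by metis
qed

lemma SM_sum_ge: "\<sigma> \<in> SM q0 k \<Longrightarrow> k \<le> sum_list \<sigma>"
proof -
  assume "\<sigma> \<in> SM q0 k"
  then have "set \<sigma> \<subseteq> {1..}" "length \<sigma> = k" by (auto simp: SM_def)
  then show ?thesis using len_le_sum_list by metis
qed

definition Ahat :: "(nat \<Rightarrow> 'a) \<Rightarrow> nat \<Rightarrow> nat \<Rightarrow> (nat \<Rightarrow> 'a) \<Rightarrow> nat \<Rightarrow> 'a" where
  "Ahat f q0 l h q = (\<Sum>\<sigma>\<in>SM q0 (l - 1).
      if sum_list \<sigma> \<le> q then Psi l (h (q - sum_list \<sigma>) # map f \<sigma>) else 0)"

fun Afold :: "(nat \<Rightarrow> 'a) \<Rightarrow> nat \<Rightarrow> nat list \<Rightarrow> (nat \<Rightarrow> 'a) \<Rightarrow> nat \<Rightarrow> 'a" where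
  "Afold f q0 [] h = h"
| "Afold f q0 (l # ls) h = Ahat f q0 l (Afold f q0 ls h)"

definition Xc :: "(nat \<Rightarrow> 'a) \<Rightarrow> nat \<Rightarrow> 'k \<Rightarrow> 'a" where
  "Xc f q0 c = (\<Sum>j\<in>{1..<q0}. c ^ j *s f j)"

lemma Psi0:
  assumes "okl l" "length r = l - 1"
  shows "Psi l (0 # r) = 0"
  using slot_zero[OF assms(1), of "[]" r] assms by (simp add: okl_def)

lemma Ahat_support:
  assumes "okl l" "\<forall>i\<ge>B. h i = 0" "B + l * q0 \<le> q"
  shows "Ahat f q0 l h q = 0"
  unfolding Ahat_def
proof (rule sum.neutral, intro ballI)
  fix \<sigma> assume s: "\<sigma> \<in> SM q0 (l - 1)"
  have "sum_list \<sigma> \<le> (l - 1) * q0" using SM_sum_le[OF s] .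
  also have "\<dots> \<le> l * q0" by simp
  finally have "B \<le> q - sum_list \<sigma>" using assms(3) by linarith
  then have "h (q - sum_list \<sigma>) = 0" using assms(2) by blast
  then show "(if sum_list \<sigma> \<le> q then Psi l (h (q - sum_list \<sigma>) # map f \<sigma>) else 0) = 0"
    using Psi0[OF assms(1)] s by (auto simp: SM_def)
qed

lemma Afold_support:
  assumes "\<forall>l\<in>set ls. okl l" "\<forall>i\<ge>B. h i = 0" "B + sum_list ls * q0 \<le> q"
  shows "Afold f q0 ls h q = 0"
  using assms
proof (induction ls arbitrary: q)
  case Nil then show ?case by simp
next
  case (Cons l ls)
  have "\<forall>i\<ge>B + sum_list ls * q0. Afold f q0 ls h i = 0" using Cons by auto
  then show ?case using Cons.prems
    by (simp, intro Ahat_support[where B="B + sum_list ls * q0"]) (auto simp: algebra_simps)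
qed

lemma single_step:
  assumes "okl l" "\<forall>i\<ge>B. h i = 0" "B + l * q0 \<le> B2"
  shows "Ad Psi l (Xc f q0 c) (\<Sum>i<B. c^i *s h i) = (\<Sum>q<B2. c^q *s Ahat f q0 l h q)"
proof -
  define SFs where "SFs = ({..<B}, \<lambda>i. c^i *s h i) # replicate (l - 1) ({1..<q0}, \<lambda>j. c^j *s f j)"
  have l1: "Suc (l - 1) = l" using assms(1) by (simp add: okl_def)
  have "Ad Psi l (Xc f q0 c) (\<Sum>i<B. c^i *s h i) = Psi l ([] @ map (\<lambda>p. sum (snd p) (fst p)) SFs)"
    by (simp add: Ad_def SFs_def Xc_def)
  also have "\<dots> = (\<Sum>is\<in>lprod (map fst SFs). Psi l ([] @ map (\<lambda>(p,i). snd p i) (zip SFs is)))"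
    using assms(1) l1 by (intro expand) (auto simp: SFs_def)
  also have "\<dots> = (\<Sum>i<B. \<Sum>\<sigma>\<in>SM q0 (l - 1). Psi l ([] @ map (\<lambda>(p,i). snd p i) (zip SFs (i # \<sigma>))))"
    unfolding SFs_def by (simp add: sum_lprod_Cons SM_lprod finite_lprod)
  also have "\<dots> = (\<Sum>i<B. \<Sum>\<sigma>\<in>SM q0 (l - 1).
       Psi l ((c^i *s h i) # map (\<lambda>j. c^j *s f j) \<sigma>))"
    by (intro sum.cong refl) (auto simp: SFs_def SM_def zip_replicate1 comp_def)
  also have "\<dots> = (\<Sum>i<B. \<Sum>\<sigma>\<in>SM q0 (l - 1). c^(i + sum_list \<sigma>) *s Psi l (h i # map f \<sigma>))"
  proof (intro sum.cong refl)
    fix i \<sigma> assume s: "\<sigma> \<in> SM q0 (l - 1)"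
    have "Psi l ([] @ map (\<lambda>(c,x). c *s x) ((c^i, h i) # map (\<lambda>j. (c^j, f j)) \<sigma>)) =
       prod_list (map fst ((c^i, h i) # map (\<lambda>j. (c^j, f j)) \<sigma>)) *s
         Psi l ([] @ map snd ((c^i, h i) # map (\<lambda>j. (c^j, f j)) \<sigma>))"
      using s l1 by (intro homog assms(1)) (auto simp: SM_def)
    then show "Psi l ((c^i *s h i) # map (\<lambda>j. c^j *s f j) \<sigma>) =
        c^(i + sum_list \<sigma>) *s Psi l (h i # map f \<sigma>)"
      by (simp add: comp_def prod_list_pow power_add)
  qed
  also have "\<dots> = (\<Sum>\<sigma>\<in>SM q0 (l - 1). \<Sum>i<B. c^(i + sum_list \<sigma>) *s Psi l (h i # map f \<sigma>))"
    by (rule sum.swap)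
  also have "\<dots> = (\<Sum>\<sigma>\<in>SM q0 (l - 1). \<Sum>q<B2. if sum_list \<sigma> \<le> q then
        c^((q - sum_list \<sigma>) + sum_list \<sigma>) *s Psi l (h (q - sum_list \<sigma>) # map f \<sigma>) else 0)"
  proof (rule sum.cong[OF refl])
    fix \<sigma> assume s: "\<sigma> \<in> SM q0 (l - 1)"
    have "sum_list \<sigma> \<le> (l - 1) * q0" using SM_sum_le[OF s] .
    also have "\<dots> \<le> l * q0" by simp
    finally have a: "sum_list \<sigma> + B \<le> B2" using assms(3) by linarith
    have b: "\<forall>i\<ge>B. c ^ (i + sum_list \<sigma>) *s Psi l (h i # map f \<sigma>) = 0"
      using assms(2) Psi0[OF assms(1)] s by (auto simp: SM_def)
    show "(\<Sum>i<B. c ^ (i + sum_list \<sigma>) *s Psi l (h i # map f \<sigma>)) = (\<Sum>q<B2. if sum_list \<sigma> \<le> q then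
        c^((q - sum_list \<sigma>) + sum_list \<sigma>) *s Psi l (h (q - sum_list \<sigma>) # map f \<sigma>) else 0)"
      using shift_sum[OF a b] by (simp cong: if_cong)
  qed
  also have "\<dots> = (\<Sum>q<B2. c^q *s Ahat f q0 l h q)"
    unfolding Ahat_def scale_sum_right
    by (subst sum.swap) (auto intro!: sum.cong)
  finally show ?thesis .
qed

lemma fold_step:
  assumes "\<forall>l\<in>set ls. okl l" "\<forall>i\<ge>B. h i = 0" "B + sum_list ls * q0 \<le> B2"
  shows "foldr (\<lambda>l g. Ad Psi l (Xc f q0 c) \<circ> g) ls id (\<Sum>i<B. c^i *s h i)
       = (\<Sum>q<B2. c^q *s Afold f q0 ls h q)"
  using assms
proof (induction ls arbitrary: B2)
  case Nil
  then show ?case by simp (intro sum.mono_neutral_cong_left, auto)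
next
  case (Cons l ls)
  let ?B' = "B + sum_list ls * q0"
  have IH: "foldr (\<lambda>l g. Ad Psi l (Xc f q0 c) \<circ> g) ls id (\<Sum>i<B. c^i *s h i)
       = (\<Sum>q<?B'. c^q *s Afold f q0 ls h q)" by (rule Cons.IH) (use Cons.prems in auto)
  have sup: "\<forall>i\<ge>?B'. Afold f q0 ls h i = 0"
    using Cons.prems by (intro allI impI Afold_support) auto
  have "foldr (\<lambda>l g. Ad Psi l (Xc f q0 c) \<circ> g) (l # ls) id (\<Sum>i<B. c^i *s h i)
      = Ad Psi l (Xc f q0 c) (foldr (\<lambda>l g. Ad Psi l (Xc f q0 c) \<circ> g) ls id (\<Sum>i<B. c^i *s h i))"
    by simp
  also have "\<dots> = Ad Psi l (Xc f q0 c) (\<Sum>q<?B'. c^q *s Afold f q0 ls h q)" by (simp only: IH)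
  also have "\<dots> = (\<Sum>q<B2. c^q *s Ahat f q0 l (Afold f q0 ls h) q)"
    using Cons.prems by (intro single_step[OF _ sup]) (auto simp: algebra_simps)
  finally show ?case by (simp only: Afold.simps)
qed

lemma graded_engel:
  assumes s0: "\<forall>s x y. s0 \<le> s \<longrightarrow> E_op scale m Psi s x y = 0" and s0p: "1 \<le> s0"
  shows "\<forall>s h (B::nat) q. s0 \<le> s \<longrightarrow> (\<forall>i\<ge>B. h i = 0) \<longrightarrow>
     (\<Sum>ls\<in>engel_seqs m s. of_nat (prod_list ls) *s Afold f q0 ls h q) = 0"
proof (intro allI impI)
    fix s and h :: "nat \<Rightarrow> 'a" and B :: nat and q assume s: "s0 \<le> s" and h: "\<forall>i\<ge>B. h i = 0"
    define B2 where "B2 = B + 2 * s * q0"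
    define Cf where "Cf q = (\<Sum>ls\<in>engel_seqs m s. of_nat (prod_list ls) *s Afold f q0 ls h q)" for q
    have ok: "ls \<in> engel_seqs m s \<Longrightarrow> (\<forall>l\<in>set ls. okl l) \<and> sum_list ls \<le> 2 * s" for ls
      using sum_list_engel[of ls] by (auto simp: engel_seqs_def okl_def)
    have pz: "(\<Sum>q<B2. c^q *s Cf q) = 0" for c
    proof -
      have "0 = E_op scale m Psi s (Xc f q0 c) (\<Sum>i<B. c^i *s h i)" using s0 s by simp
      also have "\<dots> = (\<Sum>ls\<in>engel_seqs m s. of_nat (prod_list ls) *s (\<Sum>q<B2. c^q *s Afold f q0 ls h q))"
        unfolding E_op_def
      proof (rule sum.cong[OF refl])
        fix ls assume "ls \<in> engel_seqs m s"
        then have "\<forall>l\<in>set ls. okl l" "B + sum_list ls * q0 \<le> B2"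
          using ok[of ls] by (auto simp: B2_def)
        from fold_step[OF this(1) h this(2)]
        show "of_nat (prod_list ls) *s foldr (\<lambda>l g. Ad Psi l (Xc f q0 c) \<circ> g) ls id (\<Sum>i<B. c^i *s h i) =
          of_nat (prod_list ls) *s (\<Sum>q<B2. c^q *s Afold f q0 ls h q)" by simp
      qed
      also have "\<dots> = (\<Sum>q<B2. c^q *s Cf q)"
        unfolding Cf_def scale_sum_right
        by (subst sum.swap) (simp add: mult.commute)
      finally show ?thesis by simp
    qed
    have low: "q < B2 \<Longrightarrow> Cf q = 0" for q by (rule poly_zero[where n=B2 and C=Cf, OF pz])
    have high: "B2 \<le> q \<Longrightarrow> Cf q = 0" for q
      unfolding Cf_def
    proof (intro sum.neutral ballI)
      fix ls assume q: "B2 \<le> q" and ls: "ls \<in> engel_seqs m s"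
      have o1: "\<forall>l\<in>set ls. okl l" and o2: "sum_list ls \<le> 2 * s" using ok[OF ls] by auto
      have "sum_list ls * q0 \<le> 2 * s * q0" using o2 by (rule mult_le_mono1)
      then have "B + sum_list ls * q0 \<le> q" using q unfolding B2_def by linarith
      then have "Afold f q0 ls h q = 0" by (rule Afold_support[OF o1 h])
      then show "of_nat (prod_list ls) *s Afold f q0 ls h q = 0" by simp
    qed
    show "(\<Sum>ls\<in>engel_seqs m s. of_nat (prod_list ls) *s Afold f q0 ls h q) = 0"
      using low high unfolding Cf_def by (cases "q < B2") auto
qed

end

lemma deg_V[simp]: "deg (V i) = 1" by (simp add: deg_def)

lemma deg_Op: "deg (Op ts) = sum_list (map deg ts)"
  unfolding deg_def by (simp add: length_concat comp_def)

lemma deg_pos: "wf_tm m t \<Longrightarrow> 1 \<le> deg t"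
proof (induction t)
  case (V x) then show ?case by simp
next
  case (Op ts)
  then obtain t ts' where ts: "ts = t # ts'" by (cases ts) auto
  have "1 \<le> deg t" using Op ts by auto
  then show ?case by (simp add: deg_Op ts)
qed

lemma terms_deg_Op:
  "Op ts \<in> terms_deg m q \<longleftrightarrow> 2 \<le> length ts \<and> length ts \<le> m \<and>
     (\<forall>t\<in>set ts. t \<in> terms_deg m (deg t)) \<and> sum_list (map deg ts) = q"
  by (auto simp: terms_deg_def deg_Op)

definition comps :: "nat \<Rightarrow> nat \<Rightarrow> nat list set" where
  "comps l q = {ds. length ds = l \<and> set ds \<subseteq> {1..q} \<and> sum_list ds = q}"

lemma finite_comps: "finite (comps l q)"
proof (rule finite_subset)
  show "comps l q \<subseteq> {xs. set xs \<subseteq> {1..q} \<and> length xs = l}" by (auto simp: comps_def)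
qed (rule finite_lists_length_eq, simp)

lemma member_le_sum_list: "x \<in> set (xs::nat list) \<Longrightarrow> x \<le> sum_list xs"
  by (induction xs) auto

lemma finite_terms_deg: "finite (terms_deg m q)"
proof (induction q rule: less_induct)
  case (less q)
  let ?D = "{ds. set ds \<subseteq> {..<q} \<and> length ds \<le> m}"
  have "terms_deg m q \<subseteq> {V 0} \<union> Op ` (\<Union>ds\<in>?D. lprod (map (terms_deg m) ds))"
  proof
    fix t assume t: "t \<in> terms_deg m q"
    show "t \<in> {V 0} \<union> Op ` (\<Union>ds\<in>?D. lprod (map (terms_deg m) ds))"
    proof (cases t)
      case (V i) then show ?thesis using t by (auto simp: terms_deg_def)
    next
      case (Op ts)
      have P: "2 \<le> length ts" "length ts \<le> m" "\<forall>t\<in>set ts. t \<in> terms_deg m (deg t)"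
        "sum_list (map deg ts) = q" using t Op terms_deg_Op by auto
      have "map deg ts \<in> ?D"
      proof -
        have "d < q" if d: "d \<in> set (map deg ts)" for d
        proof -
          obtain i where i: "i < length ts" "d = deg (ts ! i)" using d by (auto simp: in_set_conv_nth)
          obtain j where j: "j < length ts" "j \<noteq> i" using P(1) i(1)
            by (metis One_nat_def Suc_1 Suc_le_eq less_2_cases_iff nat_neq_iff order_less_le_trans)
          have "1 \<le> deg (ts ! j)" using P(3) j(1) deg_pos[of m "ts ! j"] by (auto simp: terms_deg_def)
          have "sum_list (map deg ts) = sum_list (map deg (take i ts)) + d + sum_list (map deg (drop (Suc i) ts))"
            using i by (metis (no_types) add.assoc id_take_nth_drop map_append list.map(2) sum_list_append sum_list.Cons)
          moreover have "deg (ts ! j) \<le> sum_list (map deg (take i ts)) + sum_list (map deg (drop (Suc i) ts))"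
          proof (cases "j < i")
            case True
            then have "ts ! j \<in> set (take i ts)" using i j by (auto simp: in_set_conv_nth intro!: exI[of _ j])
            then show ?thesis using member_le_sum_list[of "deg (ts ! j)" "map deg (take i ts)"] by auto
          next
            case False
            then have "ts ! j \<in> set (drop (Suc i) ts)" using i j
              by (auto simp: in_set_conv_nth intro!: exI[of _ "j - Suc i"])
            then show ?thesis using member_le_sum_list[of "deg (ts ! j)" "map deg (drop (Suc i) ts)"] by auto
          qed
          ultimately show ?thesis using P(4) \<open>1 \<le> deg (ts ! j)\<close> by linarith
        qed
        then show ?thesis using P by auto
      qed
      moreover have "ts \<in> lprod (map (terms_deg m) (map deg ts))"
        using P(3) by (auto simp: lprod_def list_all2_conv_all_nth)
      ultimately show ?thesis using Op by blast
    qed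
  qed
  moreover have "finite (\<Union>ds\<in>?D. lprod (map (terms_deg m) ds))"
  proof (rule finite_UN_I)
    show "finite ?D" using finite_lists_length_le[of "{..<q}" m] by (simp add: conj_commute)
    fix ds assume "ds \<in> ?D"
    then show "finite (lprod (map (terms_deg m) ds))" using less by (intro finite_lprod) auto
  qed
  ultimately show ?case by (meson finite.emptyI finite.insertI finite_Un finite_imageI finite_subset)
qed


lemma zip_map_pairs: "length ts = length ds \<Longrightarrow>
   map (\<lambda>(p,i). snd p i) (zip (map (\<lambda>d. (A d, F)) ds) ts) = map F ts"
  by (induction ds arbitrary: ts) (auto simp: length_Suc_conv)

lemma lprod_terms:
  assumes "ds \<in> comps l q" "2 \<le> l" "l \<le> m"
  shows "{ts. Op ts \<in> terms_deg m q \<and> (length ts, map deg ts) = (l, ds)} = lprod (map (terms_deg m) ds)"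
proof (intro set_eqI iffI)
  fix ts assume "ts \<in> {ts. Op ts \<in> terms_deg m q \<and> (length ts, map deg ts) = (l, ds)}"
  then have "\<forall>t\<in>set ts. t \<in> terms_deg m (deg t)" "map deg ts = ds"
    by (auto simp: terms_deg_Op)
  then show "ts \<in> lprod (map (terms_deg m) ds)"
    by (auto simp: lprod_def list_all2_conv_all_nth)
next
  fix ts assume "ts \<in> lprod (map (terms_deg m) ds)"
  then have L: "length ts = length ds" and N: "\<And>k. k < length ds \<Longrightarrow> ts ! k \<in> terms_deg m (ds ! k)"
    by (auto simp: lprod_def list_all2_conv_all_nth)
  have md: "map deg ts = ds" using L N by (intro nth_equalityI) (auto simp: terms_deg_def)
  have "\<forall>t\<in>set ts. t \<in> terms_deg m (deg t)"
    using L N md by (auto simp: in_set_conv_nth)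
  then show "ts \<in> {ts. Op ts \<in> terms_deg m q \<and> (length ts, map deg ts) = (l, ds)}"
    using assms L md by (auto simp: terms_deg_Op comps_def)
qed

context yalg begin

lemma f_rec:
  assumes "2 \<le> q"
  shows "(\<Sum>t\<in>terms_deg m q. eval_tm Psi \<rho> t) =
    (\<Sum>l\<in>{2..m}. \<Sum>ds\<in>comps l q. Psi l (map (\<lambda>d. \<Sum>t\<in>terms_deg m d. eval_tm Psi \<rho> t) ds))"
proof -
  let ?TS = "{ts. Op ts \<in> terms_deg m q}"
  let ?ev = "eval_tm Psi \<rho>"
  have TD: "terms_deg m q = Op ` ?TS"
  proof (intro set_eqI iffI)
    fix t assume t: "t \<in> terms_deg m q"
    then show "t \<in> Op ` ?TS" using assms by (cases t) (auto simp: terms_deg_def)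
  qed blast
  have inj: "inj_on Op ?TS" by (auto simp: inj_on_def)
  have "finite (Op ` ?TS)" using finite_terms_deg[of m q] TD by (simp only:)
  then have fin: "finite ?TS" using inj by (rule finite_imageD)
  have "(\<Sum>t\<in>terms_deg m q. ?ev t) = (\<Sum>t\<in>Op ` ?TS. ?ev t)"
    using TD by (rule arg_cong)
  also have "\<dots> = (\<Sum>ts\<in>?TS. ?ev (Op ts))"
    using inj by (rule sum.reindex[unfolded comp_def])
  also have "\<dots> = (\<Sum>p\<in>Sigma {2..m} (\<lambda>l. comps l q).
      \<Sum>ts\<in>{ts \<in> ?TS. (length ts, map deg ts) = p}. ?ev (Op ts))"
  proof (rule sum.group[symmetric, OF fin])
    show "finite (Sigma {2..m} (\<lambda>l. comps l q))" by (auto intro: finite_comps)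
    show "(\<lambda>ts. (length ts, map deg ts)) ` ?TS \<subseteq> Sigma {2..m} (\<lambda>l. comps l q)"
    proof
      fix p assume "p \<in> (\<lambda>ts. (length ts, map deg ts)) ` ?TS"
      then obtain ts where ts: "Op ts \<in> terms_deg m q" and p: "p = (length ts, map deg ts)" by auto
      have P: "2 \<le> length ts" "length ts \<le> m" "\<forall>t\<in>set ts. t \<in> terms_deg m (deg t)"
        "sum_list (map deg ts) = q" using ts terms_deg_Op by auto
      have "\<forall>d\<in>set (map deg ts). 1 \<le> d \<and> d \<le> q"
        using P(3,4) member_le_sum_list[of _ "map deg ts"] deg_pos by (auto simp: terms_deg_def)
      then show "p \<in> Sigma {2..m} (\<lambda>l. comps l q)" using P p by (auto simp: comps_def)
    qed
  qed
  also have "\<dots> = (\<Sum>p\<in>Sigma {2..m} (\<lambda>l. comps l q).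
      Psi (fst p) (map (\<lambda>d. \<Sum>t\<in>terms_deg m d. ?ev t) (snd p)))"
  proof (rule sum.cong[OF refl])
    fix p assume p: "p \<in> Sigma {2..m} (\<lambda>l. comps l q)"
    then obtain l ds where pe: "p = (l, ds)" and l: "2 \<le> l" "l \<le> m" and ds: "ds \<in> comps l q" by auto
    have ld: "length ds = l" using ds by (auto simp: comps_def)
    have ok: "okl l" using l by (simp add: okl_def)
    have "{ts \<in> ?TS. (length ts, map deg ts) = p} = lprod (map (terms_deg m) ds)"
      using lprod_terms[OF ds l] pe by simp
    then have "(\<Sum>ts\<in>{ts \<in> ?TS. (length ts, map deg ts) = p}. ?ev (Op ts)) =
       (\<Sum>ts\<in>lprod (map fst (map (\<lambda>d. (terms_deg m d, ?ev)) ds)).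
          Psi l ([] @ map (\<lambda>(p,i). snd p i) (zip (map (\<lambda>d. (terms_deg m d, ?ev)) ds) ts)))"
      by (auto intro!: sum.cong simp: zip_map_pairs comp_def lprod_def list_all2_conv_all_nth ld)
    also have "\<dots> = Psi l ([] @ map (\<lambda>p. sum (snd p) (fst p)) (map (\<lambda>d. (terms_deg m d, ?ev)) ds))"
      by (rule expand[symmetric, OF ok]) (auto simp: ld finite_terms_deg)
    finally show "(\<Sum>ts\<in>{ts \<in> ?TS. (length ts, map deg ts) = p}. ?ev (Op ts)) =
      Psi (fst p) (map (\<lambda>d. \<Sum>t\<in>terms_deg m d. ?ev t) (snd p))" by (simp add: pe comp_def)
  qed
  also have "\<dots> = (\<Sum>l\<in>{2..m}. \<Sum>ds\<in>comps l q. Psi l (map (\<lambda>d. \<Sum>t\<in>terms_deg m d. ?ev t) ds))"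
    by (subst sum.Sigma) (auto intro: finite_comps simp: case_prod_unfold)
  finally show ?thesis .
qed

end

lemma sum_list_le_len': "set xs \<subseteq> {..<q0} \<Longrightarrow> sum_list xs \<le> length xs * (q0 - 1)"
  by (induction xs) auto

lemma set_rm: "i < length ds \<Longrightarrow>
   x \<in> set (take i ds @ drop (Suc i) ds) \<longleftrightarrow> (\<exists>j<length ds. j \<noteq> i \<and> ds ! j = x)"
proof
  assume i: "i < length ds" and "x \<in> set (take i ds @ drop (Suc i) ds)"
  then consider "x \<in> set (take i ds)" | "x \<in> set (drop (Suc i) ds)" by auto
  then show "\<exists>j<length ds. j \<noteq> i \<and> ds ! j = x"
  proof cases
    case 1
    then obtain k where "k < length (take i ds)" "take i ds ! k = x" by (auto simp: in_set_conv_nth)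
    then show ?thesis using i by (intro exI[of _ k]) auto
  next
    case 2
    then obtain k where "k < length (drop (Suc i) ds)" "drop (Suc i) ds ! k = x" by (auto simp: in_set_conv_nth)
    then show ?thesis using i by (intro exI[of _ "Suc i + k"]) auto
  qed
next
  assume i: "i < length ds" and "\<exists>j<length ds. j \<noteq> i \<and> ds ! j = x"
  then obtain j where j: "j < length ds" "j \<noteq> i" "ds ! j = x" by auto
  show "x \<in> set (take i ds @ drop (Suc i) ds)"
  proof (cases "j < i")
    case True
    then have "take i ds ! j = x" using j by simp
    then show ?thesis using True i by (metis UnI1 length_take min.absorb4 nth_mem set_append)
  next
    case False
    then have "drop (Suc i) ds ! (j - Suc i) = x" using j by simp
    moreover have "j - Suc i < length (drop (Suc i) ds)" using False j by auto
    ultimately show ?thesis by (metis UnI2 nth_mem set_append)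
  qed
qed

context yalg begin

lemma Psi_head_add: "okl l \<Longrightarrow> length r = l - 1 \<Longrightarrow> Psi l ((x + y) # r) = Psi l (x # r) + Psi l (y # r)"
  using slot_add[of l "[]" r x y] by (simp add: okl_def)

lemma Psi_head_scale: "okl l \<Longrightarrow> length r = l - 1 \<Longrightarrow> Psi l ((c *s x) # r) = c *s Psi l (x # r)"
  using slot_scale[of l "[]" r c x] by (simp add: okl_def)

lemma Psi_head_sum: "okl l \<Longrightarrow> length r = l - 1 \<Longrightarrow> Psi l ((\<Sum>i\<in>S. g i) # r) = (\<Sum>i\<in>S. Psi l (g i # r))"
  using slot_sum[of l "[]" r g S] by (simp add: okl_def)

lemma SM_len: "\<sigma> \<in> SM q0 k \<Longrightarrow> length \<sigma> = k" by (simp add: SM_def)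

lemma Ahat_add: "okl l \<Longrightarrow> Ahat f q0 l (\<lambda>i. u i + v i) q = Ahat f q0 l u q + Ahat f q0 l v q"
  unfolding Ahat_def sum.distrib[symmetric] by (intro sum.cong refl) (simp add: Psi_head_add SM_len)

lemma Ahat_scale: "okl l \<Longrightarrow> Ahat f q0 l (\<lambda>i. c *s g i) q = c *s Ahat f q0 l g q"
  unfolding Ahat_def scale_sum_right by (intro sum.cong refl) (simp add: Psi_head_scale SM_len)

lemma Ahat_sum: "okl l \<Longrightarrow> Ahat f q0 l (\<lambda>i. \<Sum>x\<in>S. g x i) q = (\<Sum>x\<in>S. Ahat f q0 l (g x) q)"
  unfolding Ahat_def
  by (subst sum.swap) (intro sum.cong refl, simp add: Psi_head_sum SM_len)

lemma Ahat_local: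
  assumes "okl l" "\<forall>i<q. h i = h' i"
  shows "Ahat f q0 l h q = Ahat f q0 l h' q"
  unfolding Ahat_def
proof (intro sum.cong refl)
  fix \<sigma> assume s: "\<sigma> \<in> SM q0 (l - 1)"
  have "1 \<le> sum_list \<sigma>" using SM_sum_ge[OF s] assms(1) unfolding okl_def by linarith
  then show "(if sum_list \<sigma> \<le> q then Psi l (h (q - sum_list \<sigma>) # map f \<sigma>) else 0) =
    (if sum_list \<sigma> \<le> q then Psi l (h' (q - sum_list \<sigma>) # map f \<sigma>) else 0)"
    using assms(2) by auto
qed

lemma Ahat_zero_fun: "okl l \<Longrightarrow> Ahat f q0 l (\<lambda>i. 0) q = 0"
  unfolding Ahat_def by (intro sum.neutral) (simp add: Psi0 SM_len)

lemma Ahat_zero_below: "okl l \<Longrightarrow> \<forall>i<q. h i = 0 \<Longrightarrow> Ahat f q0 l h q = 0"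
  using Ahat_local[of l q h "\<lambda>i. 0"] Ahat_zero_fun by simp

definition Lh :: "(nat \<Rightarrow> 'a) \<Rightarrow> nat \<Rightarrow> (nat \<Rightarrow> 'a) \<Rightarrow> nat \<Rightarrow> 'a" where
  "Lh f q0 h q = (\<Sum>l\<in>{2..m}. of_nat l *s Ahat f q0 l h q)"

lemma okl_iff: "l \<in> {2..m} \<longleftrightarrow> okl l" by (auto simp: okl_def)

lemma Lh_add: "Lh f q0 (\<lambda>i. u i + v i) q = Lh f q0 u q + Lh f q0 v q"
  unfolding Lh_def sum.distrib[symmetric] by (intro sum.cong refl) (simp add: Ahat_add okl_def scale_right_distrib)

lemma Lh_local: "\<forall>i<q. h i = h' i \<Longrightarrow> Lh f q0 h q = Lh f q0 h' q"
  unfolding Lh_def by (intro sum.cong refl) (simp add: okl_def Ahat_local[of _ q h h'])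

lemma Lh_zero_below: "\<forall>i<q. h i = 0 \<Longrightarrow> Lh f q0 h q = 0"
  unfolding Lh_def by (intro sum.neutral) (simp add: okl_def Ahat_zero_below)

lemma Lh_support: "\<forall>i\<ge>B. h i = 0 \<Longrightarrow> B + m * q0 \<le> q \<Longrightarrow> Lh f q0 h q = 0"
  unfolding Lh_def
proof (intro sum.neutral ballI)
  fix l assume h: "\<forall>i\<ge>B. h i = 0" and q: "B + m * q0 \<le> q" and l: "l \<in> {2..m}"
  have "l * q0 \<le> m * q0" using l by (intro mult_le_mono1) simp
  then have lq: "B + l * q0 \<le> q" using q by linarith
  have "okl l" using l okl_iff by blast
  then have "Ahat f q0 l h q = 0" using h lq by (rule Ahat_support)
  then show "of_nat l *s Ahat f q0 l h q = 0" by simp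
qed

definition es0 :: "nat \<Rightarrow> nat list set" where
  "es0 s = {ls. (\<forall>l\<in>set ls. okl l) \<and> sum_list (map (\<lambda>l. l - 1) ls) = s}"

lemma es0_0: "es0 0 = {[]}"
proof -
  have "ls = []" if "(\<forall>l\<in>set ls. okl l)" "sum_list (map (\<lambda>l. l - 1) ls) = 0" for ls
    using that by (cases ls) (auto simp: okl_def)
  then show ?thesis by (auto simp: es0_def)
qed

lemma es0_pos: "0 < s \<Longrightarrow> es0 s = engel_seqs m s"
  by (auto simp: es0_def engel_seqs_def okl_def)

lemma finite_es0: "finite (es0 s)"
proof (rule finite_subset)
  show "es0 s \<subseteq> {xs. set xs \<subseteq> {..m} \<and> length xs \<le> s}"
    using len_engel by (fastforce simp: es0_def okl_def)
qed (rule finite_lists_length_le, simp)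

definition Eh :: "(nat \<Rightarrow> 'a) \<Rightarrow> nat \<Rightarrow> nat \<Rightarrow> (nat \<Rightarrow> 'a) \<Rightarrow> nat \<Rightarrow> 'a" where
  "Eh f q0 s h q = (\<Sum>ls\<in>es0 s. of_nat (prod_list ls) *s Afold f q0 ls h q)"

lemma Eh_0: "Eh f q0 0 h q = h q"
  by (simp add: Eh_def es0_0)

lemma es0_hd: "l \<in> {2..m} \<Longrightarrow> {ls \<in> es0 s. hd ls = l \<and> ls \<noteq> []} =
   (if l - 1 \<le> s then Cons l ` es0 (s - (l - 1)) else {})"
proof (cases "l - 1 \<le> s")
  case True
  assume l: "l \<in> {2..m}"
  show ?thesis
  proof (simp only: True if_True, intro set_eqI iffI)
    fix ls assume "ls \<in> {ls \<in> es0 s. hd ls = l \<and> ls \<noteq> []}"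
    then obtain ls' where "ls = l # ls'" "ls \<in> es0 s" by (cases ls) auto
    then show "ls \<in> Cons l ` es0 (s - (l - 1))" by (auto simp: es0_def)
  next
    fix ls assume "ls \<in> Cons l ` es0 (s - (l - 1))"
    then show "ls \<in> {ls \<in> es0 s. hd ls = l \<and> ls \<noteq> []}"
      using l True by (auto simp: es0_def okl_def)
  qed
next
  case False
  then show ?thesis by (auto simp: es0_def) (metis hd_Cons_tl le_add1 list.map(2) sum_list.Cons)
qed

lemma Eh_rec:
  assumes "0 < s"
  shows "Eh f q0 s h q = (\<Sum>l\<in>{2..m}. if l - 1 \<le> s then
           of_nat l *s Ahat f q0 l (Eh f q0 (s - (l - 1)) h) q else 0)"
proof -
  let ?G = "\<lambda>ls. of_nat (prod_list ls) *s Afold f q0 ls h q"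
  have ne: "ls \<in> es0 s \<Longrightarrow> ls \<noteq> []" for ls using assms by (auto simp: es0_def)
  have "Eh f q0 s h q = (\<Sum>l\<in>{2..m}. \<Sum>ls\<in>{ls \<in> es0 s. hd ls = l}. ?G ls)"
    unfolding Eh_def
  proof (rule sum.group[symmetric, OF finite_es0])
    show "hd ` es0 s \<subseteq> {2..m}"
    proof
      fix l assume "l \<in> hd ` es0 s"
      then obtain ls where "ls \<in> es0 s" "l = hd ls" by auto
      then show "l \<in> {2..m}" using ne[of ls] by (cases ls) (auto simp: es0_def okl_def)
    qed
  qed simp
  also have "\<dots> = (\<Sum>l\<in>{2..m}. if l - 1 \<le> s then
           of_nat l *s Ahat f q0 l (Eh f q0 (s - (l - 1)) h) q else 0)"
  proof (rule sum.cong[OF refl])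
    fix l assume l: "l \<in> {2..m}"
    have "{ls \<in> es0 s. hd ls = l} = {ls \<in> es0 s. hd ls = l \<and> ls \<noteq> []}" using ne by auto
    also have "\<dots> = (if l - 1 \<le> s then Cons l ` es0 (s - (l - 1)) else {})" by (rule es0_hd[OF l])
    finally have E: "{ls \<in> es0 s. hd ls = l} = (if l - 1 \<le> s then Cons l ` es0 (s - (l - 1)) else {})" .
    show "(\<Sum>ls\<in>{ls \<in> es0 s. hd ls = l}. ?G ls) = (if l - 1 \<le> s then
           of_nat l *s Ahat f q0 l (Eh f q0 (s - (l - 1)) h) q else 0)"
    proof (cases "l - 1 \<le> s")
      case True
      have ok: "okl l" using l okl_iff by blast
      have "(\<Sum>ls\<in>Cons l ` es0 (s - (l - 1)). ?G ls) = (\<Sum>ls\<in>es0 (s - (l - 1)). ?G (l # ls))"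
        by (rule sum.reindex[unfolded comp_def]) simp
      also have "\<dots> = of_nat l *s (\<Sum>ls\<in>es0 (s - (l - 1)). of_nat (prod_list ls) *s Ahat f q0 l (Afold f q0 ls h) q)"
        by (simp add: scale_sum_right mult.commute)
      also have "\<dots> = of_nat l *s Ahat f q0 l (Eh f q0 (s - (l - 1)) h) q"
        unfolding Eh_def
        by (subst Ahat_sum[OF ok]) (simp add: Ahat_scale[OF ok])
      finally show ?thesis using E True by simp
    next
      case False
      with E have emp: "{ls \<in> es0 s. hd ls = l} = {}" by simp
      show ?thesis unfolding emp sum.empty using False by simp
    qed
  qed
  finally show ?thesis .
qed

lemma Eh_all:
  "Eh f q0 s h q = (if s = 0 then h q else 0) + (\<Sum>l\<in>{2..m}. if l - 1 \<le> s then
           of_nat l *s Ahat f q0 l (Eh f q0 (s - (l - 1)) h) q else 0)"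
proof (cases "s = 0")
  case True
  have "(\<Sum>l\<in>{2..m}. if l - 1 \<le> s then
           of_nat l *s Ahat f q0 l (Eh f q0 (s - (l - 1)) h) q else 0) = 0"
    using True by (intro sum.neutral) auto
  then show ?thesis using True by (simp add: Eh_0)
qed (simp add: Eh_rec)

lemma Eh_support:
  assumes "\<forall>i\<ge>B. h i = 0" "B + 2 * s * q0 \<le> q"
  shows "Eh f q0 s h q = 0"
  unfolding Eh_def
proof (intro sum.neutral ballI)
  fix ls assume ls: "ls \<in> es0 s"
  have o1: "\<forall>l\<in>set ls. okl l" using ls by (simp add: es0_def)
  have "sum_list ls \<le> 2 * s" using sum_list_engel[of ls] ls by (auto simp: es0_def okl_def)
  then have "sum_list ls * q0 \<le> 2 * s * q0" by (rule mult_le_mono1)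
  then have "B + sum_list ls * q0 \<le> q" using assms(2) by linarith
  then show "of_nat (prod_list ls) *s Afold f q0 ls h q = 0"
    using Afold_support[OF o1 assms(1)] by simp
qed

end

locale mainctx = yalg scale m Psi
  for scale :: "'k::field_char_0 \<Rightarrow> 'a::ab_group_add \<Rightarrow> 'a" (infixr "*s" 75)
  and m :: nat and Psi :: "nat \<Rightarrow> 'a list \<Rightarrow> 'a" +
  fixes I :: "'a set" and f :: "nat \<Rightarrow> 'a" and q0 :: nat and s0 :: nat
  assumes sw: "\<And>l xs i j. okl l \<Longrightarrow> length xs = l \<Longrightarrow> i < l \<Longrightarrow> j < l \<Longrightarrow> i \<noteq> j \<Longrightarrow>
                  xs ! i \<in> I \<Longrightarrow> xs ! j \<in> I \<Longrightarrow> Psi l xs = 0"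
    and Y: "\<And>q. q0 \<le> q \<Longrightarrow> f q \<in> I"
    and q0pos: "1 \<le> q0"
    and frec: "\<And>q. 2 \<le> q \<Longrightarrow> f q = (\<Sum>l\<in>{2..m}. \<Sum>ds\<in>comps l q. Psi l (map f ds))"
    and geng: "\<And>s h B q. s0 \<le> s \<Longrightarrow> \<forall>i\<ge>B. h i = 0 \<Longrightarrow> Eh f q0 s h q = 0"
    and s0pos: "1 \<le> s0"
begin

definition NN where "NN = m * q0 + 2"

definition rmv :: "nat \<Rightarrow> nat list \<Rightarrow> nat list" where
  "rmv i ds = take i ds @ drop (Suc i) ds"

definition insv :: "nat \<Rightarrow> nat \<Rightarrow> nat list \<Rightarrow> nat list" where
  "insv i x \<sigma> = take i \<sigma> @ x # drop i \<sigma>"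

definition PP :: "nat \<Rightarrow> nat list \<Rightarrow> bool" where
  "PP i ds \<longleftrightarrow> i < length ds \<and> q0 \<le> ds ! i \<and> set (rmv i ds) \<subseteq> {..<q0}"

lemma some_big:
  assumes "ds \<in> comps l q" "NN \<le> q" "okl l"
  shows "\<exists>i<l. q0 \<le> ds ! i"
proof (rule ccontr)
  assume "\<not> (\<exists>i<l. q0 \<le> ds ! i)"
  then have "set ds \<subseteq> {..<q0}" using assms(1) by (force simp: comps_def in_set_conv_nth not_le)
  then have "sum_list ds \<le> length ds * (q0 - 1)" by (rule sum_list_le_len')
  also have "\<dots> \<le> m * (q0 - 1)" using assms(1,3) by (intro mult_le_mono1) (auto simp: comps_def okl_def)
  also have "\<dots> < NN" unfolding NN_def using q0pos by (simp add: diff_mult_distrib2)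
  finally show False using assms(1,2) by (auto simp: comps_def)
qed

lemma term_split:
  assumes ds: "ds \<in> comps l q" and q: "NN \<le> q" and ok: "okl l"
  shows "Psi l (map f ds) = (\<Sum>i<l. if PP i ds then Psi l (map f ds) else 0)"
proof (cases "\<exists>i0<l. PP i0 ds")
  case True
  then obtain i0 where i0: "i0 < l" "PP i0 ds" by blast
  have ld: "length ds = l" using ds by (simp add: comps_def)
  have "PP i ds \<longleftrightarrow> i = i0" if "i < l" for i
  proof
    assume "PP i ds"
    show "i = i0"
    proof (rule ccontr)
      assume "i \<noteq> i0"
      then have "ds ! i \<in> set (rmv i0 ds)" using set_rm[of i0 ds] i0 that ld unfolding rmv_def by auto
      then have "ds ! i < q0" using i0(2) unfolding PP_def by auto
      then show False using \<open>PP i ds\<close> unfolding PP_def by auto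
    qed
  qed (use i0 in simp)
  then have "(\<Sum>i<l. if PP i ds then Psi l (map f ds) else 0) = (\<Sum>i<l. if i = i0 then Psi l (map f ds) else 0)"
    by (intro sum.cong refl) auto
  also have "\<dots> = Psi l (map f ds)" using i0 by simp
  finally show ?thesis by simp
next
  case False
  have ld: "length ds = l" using ds by (simp add: comps_def)
  obtain i1 where i1: "i1 < l" "q0 \<le> ds ! i1" using some_big[OF ds q ok] by blast
  then have "\<not> set (rmv i1 ds) \<subseteq> {..<q0}" using False unfolding PP_def ld by auto
  then obtain x where "x \<in> set (rmv i1 ds)" "q0 \<le> x" by (meson lessThan_iff not_le subsetI)
  then obtain j where j: "j < l" "j \<noteq> i1" "ds ! j = x" using set_rm[of i1 ds] i1 ld unfolding rmv_def by auto
  have "Psi l (map f ds) = 0"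
    using sw[OF ok _ i1(1) j(1) j(2)[symmetric]] Y i1 j \<open>q0 \<le> x\<close> ld by auto
  then show ?thesis using False by simp
qed

lemma rmv_insv: "i \<le> length \<sigma> \<Longrightarrow> rmv i (insv i x \<sigma>) = \<sigma>"
  by (simp add: rmv_def insv_def)

lemma insv_rmv: "i < length ds \<Longrightarrow> insv i (ds ! i) (rmv i ds) = ds"
  by (simp add: rmv_def insv_def id_take_nth_drop[symmetric])

lemma sum_rmv: "i < length ds \<Longrightarrow> sum_list ds = sum_list (rmv i ds) + ds ! i"
  unfolding rmv_def by (subst (1) id_take_nth_drop[of i ds]) auto

lemma mset_rmv: "i < length ds \<Longrightarrow> mset (map f ds) = mset (map f (ds ! i # rmv i ds))"
  unfolding rmv_def by (subst (1) id_take_nth_drop[of i ds]) auto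

lemma per_position:
  assumes q: "NN \<le> q" and ok: "okl l" and i: "i < l"
  shows "(\<Sum>ds\<in>{ds \<in> comps l q. PP i ds}. Psi l (map f ds)) =
         (\<Sum>\<sigma>\<in>SM q0 (l - 1). Psi l (f (q - sum_list \<sigma>) # map f \<sigma>))"
proof (rule sum.reindex_bij_witness[where i="\<lambda>\<sigma>. insv i (q - sum_list \<sigma>) \<sigma>" and j="rmv i"])
  have l1: "Suc (l - 1) = l" using ok by (simp add: okl_def)
  have smallsum: "sum_list \<sigma> + q0 < q" if "\<sigma> \<in> SM q0 (l - 1)" for \<sigma>
  proof -
    have "sum_list \<sigma> \<le> (l - 1) * q0" using SM_sum_le[OF that] .
    also have "\<dots> \<le> (m - 1) * q0" using ok unfolding okl_def by (intro mult_le_mono1) linarith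
    finally have "sum_list \<sigma> \<le> (m - 1) * q0" .
    moreover have "(m - 1) * q0 + q0 = m * q0" using ok unfolding okl_def by (cases m) auto
    ultimately show ?thesis using q unfolding NN_def by linarith
  qed
  fix ds assume ds: "ds \<in> {ds \<in> comps l q. PP i ds}"
  then have ld: "length ds = l" and P: "PP i ds" and c: "ds \<in> comps l q" by (auto simp: comps_def)
  have sr: "sum_list ds = sum_list (rmv i ds) + ds ! i" using sum_rmv i ld by simp
  have sq: "sum_list ds = q" using c by (simp add: comps_def)
  show "insv i (q - sum_list (rmv i ds)) (rmv i ds) = ds"
    using insv_rmv[of i ds] sr sq i ld by simp
  have sub: "set (rmv i ds) \<subseteq> set ds" unfolding rmv_def using set_take_subset set_drop_subset by fastforce
  have a: "set (rmv i ds) \<subseteq> {..<q0}" using P by (simp add: PP_def)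
  have b: "set ds \<subseteq> {1..q}" using c by (simp add: comps_def)
  have "set (rmv i ds) \<subseteq> {1..<q0}" using a b sub by (auto simp: subset_iff)
  then show "rmv i ds \<in> SM q0 (l - 1)" using i ld by (simp add: SM_def rmv_def)
  show "Psi l (f (q - sum_list (rmv i ds)) # map f (rmv i ds)) = Psi l (map f ds)"
  proof -
    have "symmetric_op l (Psi l)" using sy ok by (simp add: okl_def)
    moreover have "mset (map f ds) = mset (f (q - sum_list (rmv i ds)) # map f (rmv i ds))"
      using mset_rmv[of i ds] sr sq i ld by simp
    ultimately show ?thesis unfolding symmetric_op_def using ld by (metis length_map)
  qed
next
  have l1: "Suc (l - 1) = l" using i by simp
  fix \<sigma> assume s: "\<sigma> \<in> SM q0 (l - 1)"
  have ls: "length \<sigma> = l - 1" using s by (simp add: SM_def)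
  have sb: "sum_list \<sigma> \<le> (l - 1) * q0" using SM_sum_le[OF s] .
  also have "\<dots> \<le> (m - 1) * q0" using ok unfolding okl_def by (intro mult_le_mono1) linarith
  finally have "sum_list \<sigma> \<le> (m - 1) * q0" .
  moreover have "(m - 1) * q0 + q0 = m * q0" using ok unfolding okl_def by (cases m) auto
  ultimately have big: "sum_list \<sigma> + q0 < q" using q unfolding NN_def by linarith
  have il: "i \<le> length \<sigma>" using i ls by simp
  show "rmv i (insv i (q - sum_list \<sigma>) \<sigma>) = \<sigma>" using rmv_insv[OF il] .
  let ?d = "insv i (q - sum_list \<sigma>) \<sigma>"
  have len: "length ?d = l" using il ls i by (simp add: insv_def)
  have nth: "?d ! i = q - sum_list \<sigma>" using il by (simp add: insv_def nth_append)
  have st: "sum_list \<sigma> = sum_list (take i \<sigma>) + sum_list (drop i \<sigma>)"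
    by (metis append_take_drop_id sum_list_append)
  have ss: "set \<sigma> = set (take i \<sigma>) \<union> set (drop i \<sigma>)"
    by (metis append_take_drop_id set_append)
  have setd: "set ?d = insert (q - sum_list \<sigma>) (set \<sigma>)"
    using ss by (auto simp: insv_def)
  have "sum_list ?d = sum_list (take i \<sigma>) + (q - sum_list \<sigma>) + sum_list (drop i \<sigma>)"
    by (simp add: insv_def)
  then have sumd: "sum_list ?d = q" using st big by linarith
  have mem: "x \<le> sum_list \<sigma>" if "x \<in> set \<sigma>" for x using member_le_sum_list[OF that] .
  have "set ?d \<subseteq> {1..q}" using setd s big mem by (auto simp: SM_def)
  then have "?d \<in> comps l q" using len sumd by (simp add: comps_def)
  moreover have "PP i ?d" unfolding PP_def using len i nth big rmv_insv[OF il] s by (auto simp: SM_def)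
  ultimately show "?d \<in> {ds \<in> comps l q. PP i ds}" by simp
qed

lemma R':
  assumes q: "NN \<le> q"
  shows "f q = Lh f q0 f q"
proof -
  have "2 \<le> q" using q unfolding NN_def by linarith
  then have "f q = (\<Sum>l\<in>{2..m}. \<Sum>ds\<in>comps l q. Psi l (map f ds))" by (rule frec)
  also have "\<dots> = (\<Sum>l\<in>{2..m}. of_nat l *s Ahat f q0 l f q)"
  proof (rule sum.cong[OF refl])
    fix l assume l: "l \<in> {2..m}"
    then have ok: "okl l" using okl_iff by blast
    have "(\<Sum>ds\<in>comps l q. Psi l (map f ds)) =
        (\<Sum>ds\<in>comps l q. \<Sum>i<l. if PP i ds then Psi l (map f ds) else 0)"
      using term_split[OF _ q ok] by (intro sum.cong refl) auto
    also have "\<dots> = (\<Sum>i<l. \<Sum>ds\<in>comps l q. if PP i ds then Psi l (map f ds) else 0)"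
      by (rule sum.swap)
    also have "\<dots> = (\<Sum>i<l. \<Sum>ds\<in>{ds \<in> comps l q. PP i ds}. Psi l (map f ds))"
      by (rule sum.cong[OF refl]) (simp add: sum.inter_filter[symmetric] finite_comps)
    also have "\<dots> = (\<Sum>i<l. \<Sum>\<sigma>\<in>SM q0 (l - 1). Psi l (f (q - sum_list \<sigma>) # map f \<sigma>))"
      using per_position[OF q ok] by (rule sum.cong[OF refl]) simp
    also have "\<dots> = of_nat l *s (\<Sum>\<sigma>\<in>SM q0 (l - 1). Psi l (f (q - sum_list \<sigma>) # map f \<sigma>))"
      by (simp add: sum_constant_scale)
    also have "(\<Sum>\<sigma>\<in>SM q0 (l - 1). Psi l (f (q - sum_list \<sigma>) # map f \<sigma>)) = Ahat f q0 l f q"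
      unfolding Ahat_def
    proof (intro sum.cong refl)
      fix \<sigma> assume s: "\<sigma> \<in> SM q0 (l - 1)"
      have "sum_list \<sigma> \<le> (l - 1) * q0" using SM_sum_le[OF s] .
      also have "\<dots> \<le> m * q0" using l by (intro mult_le_mono1) auto
      finally have "sum_list \<sigma> \<le> q" using q unfolding NN_def by linarith
      then show "Psi l (f (q - sum_list \<sigma>) # map f \<sigma>) =
         (if sum_list \<sigma> \<le> q then Psi l (f (q - sum_list \<sigma>) # map f \<sigma>) else 0)" by simp
    qed
    finally show "(\<Sum>ds\<in>comps l q. Psi l (map f ds)) = of_nat l *s Ahat f q0 l f q" .
  qed
  finally show ?thesis unfolding Lh_def .
qed

lemma eventually_zero: "m * q0 + 2 + m * q0 + 2 * s0 * q0 \<le> q \<Longrightarrow> f q = 0"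
proof -
  define u where "u i = (if i < NN then f i else 0)" for i
  define v where "v i = (if NN \<le> i then f i else 0)" for i
  define w where "w q = (if NN \<le> q then Lh f q0 u q else 0)" for q
  define W where "W = NN + m * q0"
  define T where "T q = (\<Sum>s<s0. Eh f q0 s w q)" for q
  have fuv: "f = (\<lambda>i. u i + v i)" by (auto simp: u_def v_def)
  have usup: "\<forall>i\<ge>NN. u i = 0" by (simp add: u_def)
  have wsup: "\<forall>i\<ge>W. w i = 0"
    using Lh_support[OF usup] unfolding w_def W_def by auto
  have v_eq: "v q = w q + Lh f q0 v q" for q
  proof (cases "NN \<le> q")
    case True
    have "v q = f q" using True by (simp add: v_def)
    also have "\<dots> = Lh f q0 f q" using R'[OF True] .
    also have "\<dots> = Lh f q0 u q + Lh f q0 v q" by (subst (1) fuv) (rule Lh_add)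
    finally show ?thesis using True by (simp add: w_def)
  next
    case False
    have "Lh f q0 v q = 0" using False by (intro Lh_zero_below) (simp add: v_def)
    then show ?thesis using False by (simp add: v_def w_def)
  qed
  have Ehz: "Eh f q0 s w i = 0" if "s0 \<le> s" for s i using geng[OF that wsup] .
  have T_eq: "T q = w q + Lh f q0 T q" for q
  proof -
    let ?S = "s0 + m"
    let ?X = "\<lambda>l t. of_nat l *s Ahat f q0 l (Eh f q0 t w) q"
    have "T q = (\<Sum>s<?S. Eh f q0 s w q)"
      unfolding T_def by (rule sum.mono_neutral_cong_left) (auto simp: Ehz)
    also have "\<dots> = (\<Sum>s<?S. (if s = 0 then w q else 0) + (\<Sum>l\<in>{2..m}. if l - 1 \<le> s then ?X l (s - (l - 1)) else 0))"
      by (subst Eh_all) simp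
    also have "\<dots> = w q + (\<Sum>l\<in>{2..m}. \<Sum>s<?S. if l - 1 \<le> s then ?X l (s - (l - 1)) else 0)"
      using s0pos by (simp add: sum.distrib sum.swap[of _ "{2..m}"])
    also have "\<dots> = w q + (\<Sum>l\<in>{2..m}. \<Sum>t<s0. ?X l t)"
    proof -
      have "(\<Sum>s<?S. if l - 1 \<le> s then ?X l (s - (l - 1)) else 0) = (\<Sum>t<s0. ?X l t)" if l: "l \<in> {2..m}" for l
      proof (rule shift_sum)
        show "l - 1 + s0 \<le> ?S" using l by auto
        have ok: "okl l" using l okl_iff by blast
        show "\<forall>i\<ge>s0. ?X l i = 0"
        proof (intro allI impI)
          fix i assume "s0 \<le> i"
          then have "Eh f q0 i w = (\<lambda>_. 0)" using Ehz by auto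
          then show "?X l i = 0" using Ahat_zero_fun[OF ok] by simp
        qed
      qed
      then show ?thesis by simp
    qed
    also have "(\<Sum>l\<in>{2..m}. \<Sum>t<s0. ?X l t) = Lh f q0 T q"
      unfolding Lh_def T_def
      by (intro sum.cong refl) (simp add: Ahat_sum okl_def scale_sum_right)
    finally show ?thesis .
  qed
  have vT: "v q = T q" for q
  proof (induction q rule: less_induct)
    case (less q)
    then have "Lh f q0 v q = Lh f q0 T q" by (intro Lh_local) auto
    then show ?case using v_eq[of q] T_eq[of q] by simp
  qed
  have Tz: "T q = 0" if "W + 2 * s0 * q0 \<le> q" for q
    unfolding T_def
  proof (intro sum.neutral ballI)
    fix s assume "s \<in> {..<s0}"
    then have "2 * s * q0 \<le> 2 * s0 * q0" by (intro mult_le_mono1) auto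
    then show "Eh f q0 s w q = 0" using that by (intro Eh_support[OF wsup]) linarith
  qed
  assume q0: "m * q0 + 2 + m * q0 + 2 * s0 * q0 \<le> q"
  then have q: "W + 2 * s0 * q0 \<le> q" unfolding W_def NN_def by simp
  then have "NN \<le> q" unfolding W_def by linarith
  then have "f q = v q" by (simp add: v_def)
  then show "f q = 0" using vT Tz[OF q] by simp
qed

end

lemma mset_rm: "k < length zs \<Longrightarrow> mset zs = add_mset (zs ! k) (mset (take k zs @ drop (Suc k) zs))"
  by (subst (1) id_take_nth_drop[of k zs]) auto

lemma concat_singletons: "concat (map (\<lambda>i. [i]) xs) = xs"
  by (induction xs) auto

lemma sandwich_two:
  fixes scale :: "'k::field_char_0 \<Rightarrow> 'a::ab_group_add \<Rightarrow> 'a"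
  assumes sw: "sandwich_ideal scale m Psi I" and sym: "symmetric_op l (Psi l)"
    and l: "2 \<le> l" "l \<le> m" and len: "length xs = l"
    and ij: "i < j" "j < l" and I: "xs ! i \<in> I" "xs ! j \<in> I"
  shows "Psi l xs = 0"
proof -
  define zs where "zs = take i xs @ drop (Suc i) xs"
  define rest where "rest = take (j - 1) zs @ drop (Suc (j - 1)) zs"
  have il: "i < length xs" using ij len by simp
  have lz: "length zs = l - 1" using il len by (simp add: zs_def)
  have nj: "\<not> j - 1 < i" using ij by linarith
  have zj: "zs ! (j - 1) = xs ! j" using ij il nj unfolding zs_def by (simp add: nth_append)
  have jz: "j - 1 < length zs" using ij lz by simp
  define ys where "ys = xs ! i # xs ! j # rest"
  have "mset xs = mset ys"
    using mset_rm[OF il] mset_rm[OF jz] zj unfolding ys_def rest_def zs_def by simp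
  then have e1: "Psi l xs = Psi l ys" using sym len unfolding symmetric_op_def by blast
  have lr: "length rest = l - 2" using lz jz by (simp add: rest_def)
  define \<rho> where "\<rho> = (\<lambda>i. if i = 0 then xs ! i else if i = 1 then xs ! j else rest ! (i - 2))"
  define M where "M = Op (map V [0..<l])"
  have wf: "wf_tm m M" using l by (simp add: M_def)
  have e2: "l - 2 + 2 = l" using l by simp
  have lv: "mset (leaves M) = mset [0..<(l - 2) + 2]" unfolding e2 by (simp add: M_def comp_def concat_singletons)
  have "eval_tm Psi (\<lambda>k. if k = 0 then xs ! i else if k = 1 then xs ! j else rest ! (k - 2)) M = 0"
    using sw wf lv I lr unfolding sandwich_ideal_def by blast
  moreover have "map (\<lambda>k. if k = 0 then xs ! i else if k = 1 then xs ! j else rest ! (k - 2)) [0..<l] = ys"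
  proof (rule nth_equalityI)
    show "length (map (\<lambda>k. if k = 0 then xs ! i else if k = 1 then xs ! j else rest ! (k - 2)) [0..<l]) = length ys"
      using lr l by (simp add: ys_def)
    fix n assume "n < length (map (\<lambda>k. if k = 0 then xs ! i else if k = 1 then xs ! j else rest ! (k - 2)) [0..<l])"
    then have n: "n < l" by simp
    show "map (\<lambda>k. if k = 0 then xs ! i else if k = 1 then xs ! j else rest ! (k - 2)) [0..<l] ! n = ys ! n"
      using n by (cases n; cases "n - 1") (auto simp: ys_def)
  qed
  ultimately have "Psi l ys = 0" by (simp add: M_def comp_def)
  then show ?thesis using e1 by simp
qed

theorem mainTheorem4:
  fixes scale :: "'k::field_char_0 \<Rightarrow> 'a::ab_group_add \<Rightarrow> 'a"
    and m :: nat and Psi :: "nat \<Rightarrow> 'a list \<Rightarrow> 'a" and I :: "'a set"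
  assumes "algebra_ops scale m Psi"
    and "engel_type scale m Psi"
    and "sandwich_ideal scale m Psi I"
    and "yagzhev_mod m Psi I"
  shows "yagzhev m Psi"
proof -
  interpret Y: yalg scale m Psi
    using assms(1) by (auto simp: algebra_ops_def yalg_def yalg_axioms_def)
  obtain q1 where q1: "\<forall>a q. q1 \<le> q \<longrightarrow> (\<Sum>t\<in>terms_deg m q. eval_tm Psi (\<lambda>_. a) t) \<in> I"
    using assms(4) unfolding yagzhev_mod_def by blast
  obtain s1 where s1: "\<forall>s x y. s1 \<le> s \<longrightarrow> E_op scale m Psi s x y = 0"
    using assms(2) unfolding engel_type_def by blast
  define q0 where "q0 = max q1 1"
  define s0 where "s0 = max s1 1"
  have s0: "\<forall>s x y. s0 \<le> s \<longrightarrow> E_op scale m Psi s x y = 0" using s1 by (simp add: s0_def)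
  have "\<forall>a q. m * q0 + 2 + m * q0 + 2 * s0 * q0 \<le> q \<longrightarrow>
          (\<Sum>t\<in>terms_deg m q. eval_tm Psi (\<lambda>_. a) t) = 0"
  proof (intro allI impI)
    fix a q assume q: "m * q0 + 2 + m * q0 + 2 * s0 * q0 \<le> q"
    define f where "f q = (\<Sum>t\<in>terms_deg m q. eval_tm Psi (\<lambda>_. a) t)" for q
    interpret M: mainctx scale m Psi I f q0 s0
    proof unfold_locales
      fix l xs i j assume ok: "Y.okl l" and len: "length xs = l" and ij: "i < l" "j < l" "i \<noteq> j"
        and I: "xs ! i \<in> I" "xs ! j \<in> I"
      have sym: "symmetric_op l (Psi l)" using ok Y.sy by (simp add: Y.okl_def)
      show "Psi l xs = 0"
      proof (cases "i < j")
        case True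
        then show ?thesis using sandwich_two[OF assms(3) sym _ _ len True ij(2) I] ok by (simp add: Y.okl_def)
      next
        case False
        then have ji: "j < i" using ij by simp
        show ?thesis using sandwich_two[OF assms(3) sym _ _ len ji ij(1) I(2) I(1)] ok by (simp add: Y.okl_def)
      qed
    next
      fix q assume "q0 \<le> q"
      then show "f q \<in> I" using q1 by (simp add: f_def q0_def)
    next
      show "1 \<le> q0" by (simp add: q0_def)
    next
      fix q :: nat assume "2 \<le> q"
      then show "f q = (\<Sum>l\<in>{2..m}. \<Sum>ds\<in>comps l q. Psi l (map f ds))"
        unfolding f_def by (rule Y.f_rec)
    next
      fix s and h :: "nat \<Rightarrow> 'a" and B q assume s: "s0 \<le> s" and h: "\<forall>i\<ge>(B::nat). h i = 0"
      have "0 < s" using s by (simp add: s0_def)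
      have s0ge: "1 \<le> s0" by (simp add: s0_def)
      have "(\<Sum>ls\<in>engel_seqs m s. scale (of_nat (prod_list ls)) (Y.Afold f q0 ls h q)) = 0"
        using Y.graded_engel[OF s0 s0ge, rule_format, OF s h[rule_format]] .
      then show "Y.Eh f q0 s h q = 0"
        unfolding Y.Eh_def Y.es0_pos[OF \<open>0 < s\<close>] .
    next
      show "1 \<le> s0" by (simp add: s0_def)
    qed
    show "(\<Sum>t\<in>terms_deg m q. eval_tm Psi (\<lambda>_. a) t) = 0"
      using M.eventually_zero[OF q] unfolding f_def .
  qed
  then show ?thesis unfolding yagzhev_def by blast
qed


end
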